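(* For every $n\ge1$, the number of isomorphism classes of Nakayama algebras with $n$ simple modules having finite global dimension and magnitude one equals the Catalan number $C_n=\frac{1}{n+1}\binom{2n}{n}$.
   Context: Nakayama algebras are connected finite-dimensional algebras over an algebraically closed field $K$ all of whose indecomposable modules are uniserial, given as bound quiver algebras on a linear quiver $0\to\cdots\to n-1$ or cyclic quiver $0\to\cdots\to n-1\to 0$ with admissible relations; they are determined up to isomorphism by their Kupisch series $[c_0,\dots,c_{n-1}]$, $c_i=\dim_K e_iA$ (for cyclic ones, up to cyclic rotation). The Cartan matrix $\mathbf C_A$ has entries $\dim_K e_iAe_j$; for finite global dimension it is invertible, and the magnitude is the sum of all entries of $\mathbf C_A^{-1}$. *)

theory Defs
  imports "Jordan_Normal_Form.Gauss_Jordan_Elimination"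
begin

text \<open>Nakayama algebras are encoded by their Kupisch series c = [c_0,...,c_(n-1)],
  c_i = dim e_i A.  The flag cyc distinguishes the cyclic quiver (True) from the
  linear quiver (False).  Vertices are 0..n-1, arrows i -> i+1 (mod n if cyclic).\<close>

definition kupisch_linear :: "nat \<Rightarrow> nat list \<Rightarrow> bool" where
  "kupisch_linear n c \<longleftrightarrow> length c = n \<and> n \<ge> 1 \<and> c ! (n - 1) = 1 \<and>
     (\<forall>i. i + 1 < n \<longrightarrow> c ! i \<ge> 2 \<and> c ! (i + 1) \<ge> c ! i - 1)"

definition kupisch_cyclic :: "nat \<Rightarrow> nat list \<Rightarrow> bool" where
  "kupisch_cyclic n c \<longleftrightarrow> length c = n \<and> n \<ge> 1 \<and>
     (\<forall>i<n. c ! i \<ge> 2 \<and> c ! ((i + 1) mod n) \<ge> c ! i - 1)"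

definition step :: "bool \<Rightarrow> nat \<Rightarrow> nat \<Rightarrow> nat \<Rightarrow> nat" where
  "step cyc n i k = (if cyc then (i + k) mod n else i + k)"

text \<open>Cartan matrix: entry (i,j) = dim e_i A e_j = number of nonzero paths from i to j.\<close>
definition cartan :: "bool \<Rightarrow> nat \<Rightarrow> nat list \<Rightarrow> rat mat" where
  "cartan cyc n c = mat n n (\<lambda>(i, j). of_nat (card {k. k < c ! i \<and> step cyc n i k = j}))"

text \<open>Magnitude: sum of all entries of the inverse Cartan matrix (only meaningful
  when the Cartan matrix is invertible).\<close>
definition magnitude :: "rat mat \<Rightarrow> rat" where
  "magnitude C = (case mat_inverse C of
      Some B \<Rightarrow> (\<Sum>i<dim_row B. \<Sum>j<dim_col B. B $$ (i, j))
    | None \<Rightarrow> 0)"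

text \<open>Indecomposable (uniserial) modules are given by (top vertex i, length l),
  1 \<le> l \<le> c_i; l = 0 encodes the zero module.  The first syzygy of (i,l) is the
  kernel of the projective cover P_i = (i, c_i) -> (i,l), namely rad^l P_i,
  which is the uniserial module (i+l, c_i - l).\<close>
definition syzygy :: "bool \<Rightarrow> nat \<Rightarrow> nat list \<Rightarrow> nat \<times> nat \<Rightarrow> nat \<times> nat" where
  "syzygy cyc n c M = (case M of (i, l) \<Rightarrow>
      if l = 0 then (i, 0) else (step cyc n i l, c ! i - l))"

text \<open>Finite global dimension: every simple module S_i = (i,1) has finite projective
  dimension, i.e. some iterated syzygy vanishes.\<close>
definition finite_gldim :: "bool \<Rightarrow> nat \<Rightarrow> nat list \<Rightarrow> bool" where
  "finite_gldim cyc n c \<longleftrightarrow>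
     (\<forall>i<n. \<exists>k. snd ((syzygy cyc n c ^^ k) (i, 1)) = 0)"

definition good :: "bool \<Rightarrow> nat \<Rightarrow> nat list \<Rightarrow> bool" where
  "good cyc n c \<longleftrightarrow> finite_gldim cyc n c \<and> magnitude (cartan cyc n c) = 1"

text \<open>Isomorphism classes: linear Nakayama algebras are determined by their Kupisch
  series; cyclic ones by their Kupisch series up to cyclic rotation.  Linear and
  cyclic algebras are never isomorphic (different quivers), so we tag them.\<close>
definition nakayama_classes_good :: "nat \<Rightarrow> (bool \<times> nat list set) set" where
  "nakayama_classes_good n =
     {(False, {c}) | c. kupisch_linear n c \<and> good False n c} \<union>
     {(True, {rotate k c | k. True}) | c. kupisch_cyclic n c \<and> good True n c}"

definition catalan :: "nat \<Rightarrow> nat" where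
  "catalan n = ((2 * n) choose n) div (n + 1)"

end

theory Submission
  imports Defs "Jordan_Normal_Form.Determinant"
begin


lemma cartan_carrier: "cartan cyc n c \<in> carrier_mat n n"
  unfolding cartan_def by simp

lemma fiber_sum:
  fixes w :: "nat \<Rightarrow> rat" and g :: "nat \<Rightarrow> nat"
  assumes "\<forall>k<m. g k < n"
  shows "(\<Sum>j<n. of_nat (card {k. k<m \<and> g k = j}) * w j) = (\<Sum>k<m. w (g k))"
proof -
  have "(\<Sum>k<m. w (g k)) = (\<Sum>j<n. \<Sum>k\<in>{x\<in>{..<m}. g x = j}. w (g k))"
    using assms by (intro sum.group[symmetric]) auto
  also have "\<dots> = (\<Sum>j<n. of_nat (card {k. k<m \<and> g k = j}) * w j)"
  proof (rule sum.cong[OF refl])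
    fix j assume "j \<in> {..<n}"
    have eq: "{x\<in>{..<m}. g x = j} = {k. k<m \<and> g k = j}" by auto
    have "(\<Sum>k\<in>{k. k<m \<and> g k = j}. w (g k)) = (\<Sum>k\<in>{k. k<m \<and> g k = j}. w j)"
      by (rule sum.cong) auto
    then show "(\<Sum>k\<in>{x\<in>{..<m}. g x = j}. w (g k)) = of_nat (card {k. k<m \<and> g k = j}) * w j"
      unfolding eq by simp
  qed
  finally show ?thesis by simp
qed

lemma cartan_mult:
  assumes "i < n" "z \<in> carrier_vec n" "\<forall>k<c!i. step cyc n i k < n"
  shows "(cartan cyc n c *\<^sub>v z) $ i = (\<Sum>k<c!i. z $ step cyc n i k)"
proof -
  have "(cartan cyc n c *\<^sub>v z) $ i = (\<Sum>j<n. of_nat (card {k. k<c!i \<and> step cyc n i k = j}) * z $ j)"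
    using assms(1,2) unfolding cartan_def mult_mat_vec_def scalar_prod_def
    by (auto simp: atLeast0LessThan intro!: sum.cong)
  also have "\<dots> = (\<Sum>k<c!i. z $ step cyc n i k)"
    by (rule fiber_sum) (use assms(3) in auto)
  finally show ?thesis .
qed

definition ones :: "nat \<Rightarrow> rat vec" where "ones n = vec n (\<lambda>_. 1)"

lemma mag_one_imp:
  assumes C: "C \<in> carrier_mat n n" and m: "magnitude C = 1"
  shows "\<exists>z\<in>carrier_vec n. C *\<^sub>v z = ones n \<and> (\<Sum>j<n. z$j) = 1"
proof (cases "mat_inverse C")
  case None
  then show ?thesis using m unfolding magnitude_def by simp
next
  case (Some B)
  from mat_inverse(2)[OF C Some] have CB: "C * B = 1\<^sub>m n" and B: "B \<in> carrier_mat n n" by auto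
  define z where "z = B *\<^sub>v ones n"
  have zc: "z \<in> carrier_vec n" using B unfolding z_def ones_def by simp
  have zi: "z $ i = (\<Sum>j<n. B $$ (i,j))" if "i<n" for i
    using that B unfolding z_def ones_def mult_mat_vec_def scalar_prod_def
    by (auto simp: atLeast0LessThan)
  have "C *\<^sub>v z = (C * B) *\<^sub>v ones n"
    unfolding z_def by (rule assoc_mult_mat_vec[symmetric]) (use C B in \<open>auto simp: ones_def\<close>)
  also have "\<dots> = ones n" unfolding CB ones_def by simp
  finally have 1: "C *\<^sub>v z = ones n" .
  have "magnitude C = (\<Sum>i<n. \<Sum>j<n. B $$ (i,j))"
    unfolding magnitude_def Some using B by simp
  also have "\<dots> = (\<Sum>i<n. z $ i)" using zi by simp
  finally show ?thesis using zc 1 m by auto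
qed

lemma mag_one_intro:
  assumes C: "C \<in> carrier_mat n n"
    and inj: "\<And>z. z \<in> carrier_vec n \<Longrightarrow> C *\<^sub>v z = 0\<^sub>v n \<Longrightarrow> z = 0\<^sub>v n"
    and sm: "\<And>z. z \<in> carrier_vec n \<Longrightarrow> C *\<^sub>v z = ones n \<Longrightarrow> (\<Sum>j<n. z$j) = 1"
  shows "magnitude C = 1"
proof -
  have "det C \<noteq> 0" using det_0_iff_vec_prod_zero[OF C] inj by blast
  then have U: "C \<in> Units (ring_mat TYPE(rat) n ())" by (rule det_non_zero_imp_unit[OF C])
  obtain B where Some: "mat_inverse C = Some B"
    using mat_inverse(1)[OF C, of "()"] U by (cases "mat_inverse C") auto
  from mat_inverse(2)[OF C Some] have CB: "C * B = 1\<^sub>m n" and B: "B \<in> carrier_mat n n" by auto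
  define z where "z = B *\<^sub>v ones n"
  have zc: "z \<in> carrier_vec n" using B unfolding z_def ones_def by simp
  have zi: "z $ i = (\<Sum>j<n. B $$ (i,j))" if "i<n" for i
    using that B unfolding z_def ones_def mult_mat_vec_def scalar_prod_def
    by (auto simp: atLeast0LessThan)
  have "C *\<^sub>v z = (C * B) *\<^sub>v ones n"
    unfolding z_def by (rule assoc_mult_mat_vec[symmetric]) (use C B in \<open>auto simp: ones_def\<close>)
  also have "\<dots> = ones n" unfolding CB ones_def by simp
  finally have 1: "C *\<^sub>v z = ones n" .
  have "magnitude C = (\<Sum>i<n. \<Sum>j<n. B $$ (i,j))"
    unfolding magnitude_def Some using B by simp
  also have "\<dots> = (\<Sum>i<n. z $ i)" using zi by simp
  also have "\<dots> = 1" using sm[OF zc 1] .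
  finally show ?thesis .
qed


definition ecy :: "nat \<Rightarrow> nat list \<Rightarrow> nat \<Rightarrow> nat" where "ecy n c x = x + c ! (x mod n)"
definition ebar :: "nat \<Rightarrow> nat list \<Rightarrow> nat \<Rightarrow> nat" where "ebar n c y = (y + c ! y) mod n"
definition Zs :: "nat \<Rightarrow> rat vec \<Rightarrow> nat \<Rightarrow> rat" where "Zs n z x = (\<Sum>y<x. z $ (y mod n))"

lemma Zs_add: "Zs n z (x + m) = Zs n z x + (\<Sum>k<m. z $ ((x + k) mod n))"
  by (induction m) (auto simp: Zs_def)

lemma sum_mod_shift: "(\<Sum>k<m. z $ ((x + k) mod n)) = (\<Sum>k<m. z $ ((x mod n + k) mod n))"
  by (rule sum.cong) (auto simp: mod_add_left_eq)

lemma Zs_period: "Zs n z (x + n) = Zs n z x + (\<Sum>j<n. z $ j)"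
proof (induction x)
  case 0
  have "Zs n z n = (\<Sum>j<n. z $ j)" unfolding Zs_def by (rule sum.cong) auto
  then show ?case by (simp add: Zs_def)
next
  case (Suc x)
  have "Zs n z (Suc x + n) = Zs n z (x + n) + z $ ((x + n) mod n)" by (simp add: Zs_def)
  moreover have "Zs n z (Suc x) = Zs n z x + z $ (x mod n)" by (simp add: Zs_def)
  ultimately show ?case using Suc by simp
qed

lemma Zs_period_mult: "Zs n z (x + q * n) = Zs n z x + of_nat q * (\<Sum>j<n. z $ j)"
proof (induction q)
  case (Suc q)
  have "x + Suc q * n = (x + q * n) + n" by simp
  then show ?case using Suc Zs_period[of n z "x + q * n"] by (simp add: algebra_simps)
qed simp

locale kcyc =
  fixes n :: nat and c :: "nat list"
  assumes kc: "kupisch_cyclic n c"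
begin

abbreviation "e \<equiv> ecy n c"
abbreviation "eb \<equiv> ebar n c"

lemma npos: "n \<ge> 1" and len: "length c = n"
  using kc unfolding kupisch_cyclic_def by auto

lemma cge2: "i < n \<Longrightarrow> c ! i \<ge> 2"
  using kc unfolding kupisch_cyclic_def by auto

lemma cstep: "i < n \<Longrightarrow> c ! ((i + 1) mod n) + 1 \<ge> c ! i"
  using kc unfolding kupisch_cyclic_def by force

lemma e_Suc: "e x \<le> e (Suc x)"
proof -
  have i: "x mod n < n" using npos by simp
  have "Suc x mod n = (x mod n + 1) mod n" by (simp add: mod_Suc_eq)
  then show ?thesis using cstep[OF i] unfolding ecy_def by simp
qed

lemma e_mono: "x \<le> y \<Longrightarrow> e x \<le> e y"
  using e_Suc by (rule lift_Suc_mono_le)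

lemma e_ge: "e x \<ge> x + 2"
  using cge2[of "x mod n"] npos unfolding ecy_def by simp

lemma e_shift: "e (x + n) = e x + n"
  unfolding ecy_def by simp

lemma e_mod: "e x mod n = eb (x mod n)"
  unfolding ecy_def ebar_def by (simp add: mod_add_left_eq)

lemma ep_mono: "x \<le> y \<Longrightarrow> (e ^^ m) x \<le> (e ^^ m) y"
  by (induction m) (auto intro: e_mono)

lemma ep_shift: "(e ^^ m) (x + n) = (e ^^ m) x + n"
  by (induction m) (auto simp: e_shift)

lemma ep_mod: "(e ^^ m) x mod n = (eb ^^ m) (x mod n)"
  by (induction m) (auto simp: e_mod)

lemma ep_strict: "j < j' \<Longrightarrow> (e ^^ j) u < (e ^^ j') u"
proof (induction j' arbitrary: j)
  case (Suc j')
  have *: "(e ^^ j') u < (e ^^ Suc j') u" using e_ge[of "(e ^^ j') u"] by simp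
  show ?case
  proof (cases "j = j'")
    case True then show ?thesis using * by simp
  next
    case False
    then have "j < j'" using Suc.prems by simp
    from order.strict_trans[OF Suc.IH[OF this] *] show ?thesis .
  qed
qed simp

lemma ep_le_imp: "(e ^^ j) u \<le> (e ^^ j') u \<Longrightarrow> j \<le> j'"
  using ep_strict[of j' j u] by (cases "j' < j") auto

lemma eb_lt: "y < n \<Longrightarrow> eb y < n"
  unfolding ebar_def using npos by simp

lemma cartan_row_Zs:
  assumes z: "z \<in> carrier_vec n"
  shows "Zs n z (e x) = Zs n z x + (cartan True n c *\<^sub>v z) $ (x mod n)"
proof -
  have i: "x mod n < n" using npos by simp
  have "(cartan True n c *\<^sub>v z) $ (x mod n) = (\<Sum>k<c!(x mod n). z $ step True n (x mod n) k)"
    by (rule cartan_mult[OF i z]) (use npos in \<open>auto simp: step_def\<close>)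
  also have "\<dots> = (\<Sum>k<c!(x mod n). z $ ((x + k) mod n))"
    using sum_mod_shift[where m="c!(x mod n)" and z=z and x=x and n=n] by (simp add: step_def)
  finally show ?thesis unfolding ecy_def Zs_add by simp
qed

definition T :: "nat \<Rightarrow> nat \<Rightarrow> bool" where
  "T i m \<longleftrightarrow> (e ^^ m) i = (e ^^ m) (Suc i) \<or> (e ^^ m) (Suc i) = (e ^^ Suc m) i"

lemma T_Suc: "T i m \<Longrightarrow> T i (Suc m)"
  unfolding T_def by (auto simp del: funpow.simps simp: funpow.simps(2)[of "Suc m"] funpow.simps(2)[of m] o_def)

lemma T_mono: assumes "T i m" "m \<le> m'" shows "T i m'"
  using assms(2,1) by (induction rule: dec_induct) (auto intro: T_Suc)

primrec Pk :: "nat \<Rightarrow> nat \<Rightarrow> nat \<times> nat" where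
  "Pk i 0 = (i, Suc i)"
| "Pk i (Suc k) = (snd (Pk i k), e (fst (Pk i k)))"

lemma Pk_eo: "Pk i (2*m) = ((e ^^ m) i, (e ^^ m) (Suc i)) \<and> Pk i (Suc (2*m)) = ((e ^^ m) (Suc i), (e ^^ Suc m) i)"
  by (induction m) auto

lemma Pk_inv: "fst (Pk i k) \<le> snd (Pk i k) \<and> snd (Pk i k) \<le> e (fst (Pk i k))"
proof (induction k)
  case 0 then show ?case using e_ge[of i] by simp
next
  case (Suc k) then show ?case using e_mono by auto
qed

lemma syz_fix: "snd M = 0 \<Longrightarrow> (syzygy True n c ^^ j) M = M"
  by (induction j) (cases M, auto simp: syzygy_def)+

lemma syz_formula:
  assumes "\<forall>j<k. fst (Pk i j) \<noteq> snd (Pk i j)"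
  shows "(syzygy True n c ^^ k) (i mod n, 1) = (fst (Pk i k) mod n, snd (Pk i k) - fst (Pk i k))"
  using assms
proof (induction k)
  case 0 then show ?case by simp
next
  case (Suc k)
  obtain a b where ab: "Pk i k = (a, b)" by (cases "Pk i k")
  have ne: "a \<noteq> b" using Suc.prems ab by (metis fst_conv lessI snd_conv)
  have inv: "a \<le> b" "b \<le> e a" using Pk_inv[of i k] ab by auto
  have IH: "(syzygy True n c ^^ k) (i mod n, 1) = (a mod n, b - a)" using Suc ab by auto
  have 1: "(a mod n + (b - a)) mod n = b mod n"
    using inv(1) by (metis le_add_diff_inverse mod_add_left_eq)
  have 2: "c ! (a mod n) - (b - a) = e a - b" using inv unfolding ecy_def by simp
  have "(syzygy True n c ^^ Suc k) (i mod n, 1) = syzygy True n c (a mod n, b - a)" using IH by simp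
  also have "\<dots> = (b mod n, e a - b)" using ne inv 1 2 by (simp add: syzygy_def step_def)
  finally show ?case using ab by simp
qed

lemma exists_eq_iff: "(\<exists>k. fst (Pk i k) = snd (Pk i k)) \<longleftrightarrow> (\<exists>m. T i m)"
proof
  assume "\<exists>k. fst (Pk i k) = snd (Pk i k)"
  then obtain k where k: "fst (Pk i k) = snd (Pk i k)" by blast
  have "k = 2 * (k div 2) \<or> k = Suc (2 * (k div 2))" by presburger
  then show "\<exists>m. T i m"
  proof
    assume "k = 2 * (k div 2)"
    then have "T i (k div 2)" using k Pk_eo[of i "k div 2"] unfolding T_def by (metis fst_conv snd_conv)
    then show ?thesis by blast
  next
    assume "k = Suc (2 * (k div 2))"
    then have "T i (k div 2)" using k Pk_eo[of i "k div 2"] unfolding T_def by (metis fst_conv snd_conv)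
    then show ?thesis by blast
  qed
next
  assume "\<exists>m. T i m"
  then obtain m where "T i m" by blast
  then show "\<exists>k. fst (Pk i k) = snd (Pk i k)"
    unfolding T_def using Pk_eo[of i m] by (metis fst_conv snd_conv)
qed

lemma gldim_iff: "finite_gldim True n c \<longleftrightarrow> (\<forall>i<n. \<exists>m. T i m)"
proof
  assume fg: "finite_gldim True n c"
  show "\<forall>i<n. \<exists>m. T i m"
  proof (intro allI impI)
    fix i assume i: "i < n"
    obtain k where k: "snd ((syzygy True n c ^^ k) (i, 1)) = 0" using fg i unfolding finite_gldim_def by blast
    have "\<exists>k. fst (Pk i k) = snd (Pk i k)"
    proof (rule ccontr)
      assume "\<not> ?thesis"
      then have "\<forall>j<k. fst (Pk i j) \<noteq> snd (Pk i j)" "fst (Pk i k) \<noteq> snd (Pk i k)" by auto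
      from syz_formula[OF this(1)] this(2) Pk_inv[of i k] k i show False by simp
    qed
    then show "\<exists>m. T i m" using exists_eq_iff by blast
  qed
next
  assume H: "\<forall>i<n. \<exists>m. T i m"
  show "finite_gldim True n c" unfolding finite_gldim_def
  proof (intro allI impI)
    fix i assume i: "i < n"
    have ex: "\<exists>k. fst (Pk i k) = snd (Pk i k)" using H i exists_eq_iff by blast
    define k where "k = (LEAST k. fst (Pk i k) = snd (Pk i k))"
    have kk: "fst (Pk i k) = snd (Pk i k)" unfolding k_def by (rule LeastI_ex[OF ex])
    have "\<forall>j<k. fst (Pk i j) \<noteq> snd (Pk i j)" unfolding k_def using not_less_Least by blast
    from syz_formula[OF this] kk i have "snd ((syzygy True n c ^^ k) (i, 1)) = 0" by simp
    then show "\<exists>k. snd ((syzygy True n c ^^ k) (i, 1)) = 0" by blast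
  qed
qed

end


lemma fin_choice:
  fixes N :: nat and P :: "nat \<Rightarrow> nat \<Rightarrow> bool"
  shows "(\<forall>i<N. \<exists>m. P i m) \<Longrightarrow> \<exists>M. \<forall>i<N. \<exists>m\<le>M. P i m"
proof (induction N)
  case 0 then show ?case by simp
next
  case (Suc N)
  then obtain M where M: "\<forall>i<N. \<exists>m\<le>M. P i m" by auto
  obtain m0 where m0: "P N m0" using Suc.prems by auto
  have "\<forall>i<Suc N. \<exists>m\<le>max M m0. P i m"
  proof (intro allI impI)
    fix i assume "i < Suc N"
    then consider "i < N" | "i = N" by linarith
    then show "\<exists>m\<le>max M m0. P i m"
    proof cases
      case 1 then obtain m where "m \<le> M" "P i m" using M by blast
      then show ?thesis by (intro exI[of _ m]) auto
    next
      case 2 then show ?thesis using m0 by (intro exI[of _ m0]) auto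
    qed
  qed
  then show ?case by blast
qed

lemma modeq_cases:
  fixes a b n :: nat
  assumes "a \<le> b" "b \<le> a + n" "a mod n = b mod n"
  shows "b = a \<or> b = a + n"
proof -
  have "n dvd (b - a)" using assms(1,3) mod_eq_dvd_iff_nat[where m=b and n=a and q=n] by simp
  then obtain q where q: "b - a = n * q" by blast
  have "n * q \<le> n" using q assms(1,2) by linarith
  then have "q \<le> 1 \<or> n = 0" by (cases q) auto
  then have "q = 0 \<or> q = 1 \<or> n = 0" by auto
  then show ?thesis using q assms by auto
qed

context kcyc begin

lemma ones_nth: "x mod n < n \<Longrightarrow> ones n $ (x mod n) = 1"
  unfolding ones_def by simp

lemma good_imp:
  assumes "good True n c"
  shows "\<exists>x0<n. c!x0 = n \<and> (\<forall>y<n. \<exists>m. (eb ^^ m) y = x0)"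
proof -
  from assms have fg: "finite_gldim True n c" and mg: "magnitude (cartan True n c) = 1"
    unfolding good_def by auto
  obtain z where zc: "z \<in> carrier_vec n" and Cz: "cartan True n c *\<^sub>v z = ones n"
    and S: "(\<Sum>j<n. z$j) = 1"
    using mag_one_imp[OF cartan_carrier mg] by blast
  have Ze: "Zs n z (e x) = Zs n z x + 1" for x
    using cartan_row_Zs[OF zc, of x] Cz ones_nth[of x] npos by simp
  have Zep: "Zs n z ((e ^^ j) x) = Zs n z x + of_nat j" for j x
    by (induction j) (auto simp: Ze)
  have Zn: "Zs n z (x + n) = Zs n z x + 1" for x using Zs_period[of n z x] S by simp
  obtain M0 where M0: "\<forall>i<n. \<exists>m\<le>M0. T i m"
    using fin_choice[of n T] fg gldim_iff by blast
  have TM: "T i M0" if "i < n" for i using M0 that T_mono by blast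
  define u where "u = (e ^^ M0) 0"
  have chain: "y \<le> n \<Longrightarrow> \<exists>j. (e ^^ M0) y = (e ^^ j) u" for y
  proof (induction y)
    case 0 then show ?case by (intro exI[of _ 0]) (simp add: u_def)
  next
    case (Suc y)
    then obtain j where j: "(e ^^ M0) y = (e ^^ j) u" by auto
    have "T y M0" using TM Suc.prems by simp
    then have "(e ^^ M0) (Suc y) = (e ^^ M0) y \<or> (e ^^ M0) (Suc y) = e ((e ^^ M0) y)"
      unfolding T_def by auto
    then show ?case
    proof
      assume "(e ^^ M0) (Suc y) = (e ^^ M0) y" then show ?thesis using j by auto
    next
      assume "(e ^^ M0) (Suc y) = e ((e ^^ M0) y)"
      then have "(e ^^ M0) (Suc y) = (e ^^ Suc j) u" using j by simp
      then show ?thesis by blast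
    qed
  qed
  obtain j where j: "(e ^^ M0) n = (e ^^ j) u" using chain by blast
  have un: "(e ^^ M0) n = u + n" using ep_shift[of M0 0] unfolding u_def by simp
  have "Zs n z u + of_nat j = Zs n z u + 1" using Zep[of j u] Zn[of u] j un by simp
  then have j1: "j = 1" by simp
  have eu: "e u = u + n" using j j1 un by simp
  then have cx0: "c ! (u mod n) = n" unfolding ecy_def by simp
  have x0n: "u mod n < n" using npos by simp
  have "\<forall>y<n. (eb ^^ M0) y = u mod n"
  proof (intro allI impI)
    fix y assume y: "y < n"
    obtain jy where jy: "(e ^^ M0) y = (e ^^ jy) u" using chain y by fastforce
    have "(e ^^ M0) y \<le> (e ^^ M0) n" using ep_mono y by simp
    then have "(e ^^ jy) u \<le> (e ^^ 1) u" using jy j j1 by simp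
    then have "jy \<le> 1" by (rule ep_le_imp)
    then have "(e ^^ M0) y = u \<or> (e ^^ M0) y = u + n" using jy eu by (cases jy) auto
    then have "(e ^^ M0) y mod n = u mod n" by auto
    then show "(eb ^^ M0) y = u mod n" using ep_mod[of M0 y] y by simp
  qed
  then show ?thesis using cx0 x0n by blast
qed

lemma good_intro:
  assumes x0: "x0 < n" "c!x0 = n" and reach: "\<forall>y<n. \<exists>m. (eb ^^ m) y = x0"
  shows "good True n c"
proof -
  have ex0: "e w = w + n" if "w mod n = x0" for w using that x0 unfolding ecy_def by simp
  have persist: "(e ^^ (j + m)) x mod n = x0" if "(e ^^ m) x mod n = x0" for j m x
  proof (induction j)
    case 0 then show ?case using that by simp
  next
    case (Suc j) then show ?case using ex0 by simp
  qed
  have lreach: "\<exists>m. (e ^^ m) x mod n = x0" for x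
  proof -
    have "x mod n < n" using npos by simp
    then obtain m where "(eb ^^ m) (x mod n) = x0" using reach by blast
    then show ?thesis using ep_mod by metis
  qed
  have fg: "finite_gldim True n c" unfolding gldim_iff
  proof (intro allI impI)
    fix i assume i: "i < n"
    obtain m1 where m1: "(e ^^ m1) i mod n = x0" using lreach by blast
    obtain m2 where m2: "(e ^^ m2) (Suc i) mod n = x0" using lreach by blast
    define m where "m = m2 + m1"
    have a: "(e ^^ m) i mod n = x0" unfolding m_def using persist[OF m1] .
    have b: "(e ^^ m) (Suc i) mod n = x0" unfolding m_def using persist[OF m2, of m1] by (simp add: add.commute)
    have le1: "(e ^^ m) i \<le> (e ^^ m) (Suc i)" by (rule ep_mono) simp
    have "(e ^^ m) (Suc i) \<le> (e ^^ m) (e i)" by (rule ep_mono) (use e_ge[of i] in simp)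
    also have "\<dots> = (e ^^ Suc m) i" by (simp add: funpow_Suc_right del: funpow.simps)
    also have "\<dots> = (e ^^ m) i + n" using ex0[OF a] by simp
    finally have le2: "(e ^^ m) (Suc i) \<le> (e ^^ m) i + n" .
    have "(e ^^ m) (Suc i) = (e ^^ m) i \<or> (e ^^ m) (Suc i) = (e ^^ m) i + n"
      by (rule modeq_cases[OF le1 le2]) (use a b in simp)
    then have "T i m" unfolding T_def using ex0[OF a] by auto
    then show "\<exists>m. T i m" by blast
  qed
  have mg: "magnitude (cartan True n c) = 1"
  proof (rule mag_one_intro[OF cartan_carrier])
    fix z :: "rat vec" assume zc: "z \<in> carrier_vec n" and Cz: "cartan True n c *\<^sub>v z = 0\<^sub>v n"
    have Ze: "Zs n z (e x) = Zs n z x" for x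
      using cartan_row_Zs[OF zc, of x] Cz npos by simp
    have Zep: "Zs n z ((e ^^ j) x) = Zs n z x" for j x
      by (induction j) (auto simp: Ze)
    have S: "(\<Sum>j<n. z$j) = 0" using Ze[of x0] ex0[of x0] x0 Zs_period[of n z x0] by simp
    have Zc: "Zs n z y = Zs n z x0" for y
    proof -
      obtain m where m: "(e ^^ m) y mod n = x0" using lreach by blast
      define w where "w = (e ^^ m) y"
      have "w = x0 + (w div n) * n" using m unfolding w_def by (metis mod_div_mult_eq add.commute)
      then have "Zs n z w = Zs n z x0" using Zs_period_mult[of n z x0 "w div n"] S by simp
      then show ?thesis using Zep[of m y] unfolding w_def by simp
    qed
    show "z = 0\<^sub>v n"
    proof (rule eq_vecI)
      fix j assume j: "j < dim_vec (0\<^sub>v n :: rat vec)"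
      have "Zs n z (Suc j) = Zs n z j + z $ (j mod n)" by (simp add: Zs_def)
      then show "z $ j = 0\<^sub>v n $ j" using Zc[of "Suc j"] Zc[of j] j by simp
    qed (use zc in simp)
  next
    fix z :: "rat vec" assume zc: "z \<in> carrier_vec n" and Cz: "cartan True n c *\<^sub>v z = ones n"
    have Ze: "Zs n z (e x) = Zs n z x + 1" for x
      using cartan_row_Zs[OF zc, of x] Cz ones_nth[of x] npos by simp
    show "(\<Sum>j<n. z$j) = 1" using Ze[of x0] ex0[of x0] x0 Zs_period[of n z x0] by simp
  qed
  show ?thesis unfolding good_def using fg mg by simp
qed

end


definition hered :: "nat \<Rightarrow> nat list" where "hered n = map (\<lambda>i. n - i) [0..<n]"
definition Pl :: "rat vec \<Rightarrow> nat \<Rightarrow> rat" where "Pl z x = (\<Sum>y<x. z $ y)"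

lemma Pl_add: "Pl z (x + m) = Pl z x + (\<Sum>k<m. z $ (x + k))"
  by (induction m) (auto simp: Pl_def)

lemma lin_bound:
  assumes kl: "kupisch_linear n c" and i: "i < n"
  shows "i + c!i \<le> n \<and> c!i \<ge> 1"
  using i
proof (induction "n - i" arbitrary: i rule: less_induct)
  case less
  show ?case
  proof (cases "i + 1 < n")
    case True
    have h: "c!i \<ge> 2" "c!(i+1) \<ge> c!i - 1" using kl True unfolding kupisch_linear_def by auto
    have "i + 1 + c!(i+1) \<le> n" using less.hyps[of "i+1"] True by simp
    then show ?thesis using h by simp
  next
    case False
    then have "i = n - 1" using less.prems by simp
    then show ?thesis using kl less.prems unfolding kupisch_linear_def by auto
  qed
qed

lemma lin_row:
  assumes kl: "kupisch_linear n c" and z: "z \<in> carrier_vec n" and i: "i < n"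
  shows "(cartan False n c *\<^sub>v z) $ i = Pl z (i + c!i) - Pl z i"
proof -
  have "(cartan False n c *\<^sub>v z) $ i = (\<Sum>k<c!i. z $ step False n i k)"
    by (rule cartan_mult[OF i z]) (use lin_bound[OF kl i] in \<open>auto simp: step_def\<close>)
  then show ?thesis unfolding Pl_add by (simp add: step_def)
qed

lemma lin_good_imp:
  assumes kl: "kupisch_linear n c" and g: "good False n c"
  shows "c = hered n"
proof -
  have mg: "magnitude (cartan False n c) = 1" using g unfolding good_def by simp
  obtain z where zc: "z \<in> carrier_vec n" and Cz: "cartan False n c *\<^sub>v z = ones n"
    and S: "(\<Sum>j<n. z$j) = 1"
    using mag_one_imp[OF cartan_carrier mg] by blast
  have row: "Pl z (i + c!i) = Pl z i + 1" if "i < n" for i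
    using lin_row[OF kl zc that] Cz that by (simp add: ones_def)
  have ge: "Pl z n - Pl z x \<ge> 1" if "x < n" for x
    using that
  proof (induction "n - x" arbitrary: x rule: less_induct)
    case less
    have b: "x + c!x \<le> n" "c!x \<ge> 1" using lin_bound[OF kl less.prems] by auto
    show ?case
    proof (cases "x + c!x = n")
      case True then show ?thesis using row[OF less.prems] by simp
    next
      case False
      then have "x + c!x < n" using b by simp
      then have "Pl z n - Pl z (x + c!x) \<ge> 1" using less.hyps[of "x + c!x"] b by simp
      then show ?thesis using row[OF less.prems] by simp
    qed
  qed
  have n1: "n \<ge> 1" using kl unfolding kupisch_linear_def by simp
  have Pn: "Pl z n = 1" using S by (simp add: Pl_def)
  have P0: "Pl z 0 = 0" by (simp add: Pl_def)
  have c0: "c!0 = n"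
  proof (rule ccontr)
    assume "c!0 \<noteq> n"
    then have "c!0 < n" "c!0 \<ge> 1" using lin_bound[OF kl, of 0] n1 by auto
    then have "Pl z n - Pl z (c!0) \<ge> 1" using ge by simp
    moreover have "Pl z (c!0) = 1" using row[of 0] n1 P0 by simp
    ultimately show False using Pn by simp
  qed
  have low: "c!i \<ge> n - i" if "i < n" for i
    using that
  proof (induction i)
    case 0 then show ?case using c0 by simp
  next
    case (Suc i)
    then have "c!(i+1) \<ge> c!i - 1" using kl unfolding kupisch_linear_def by auto
    then show ?case using Suc by simp
  qed
  have len: "length c = n" using kl unfolding kupisch_linear_def by simp
  show ?thesis
  proof (rule nth_equalityI)
    show "length c = length (hered n)" using len by (simp add: hered_def)
  next
    fix i assume "i < length c"
    then have i: "i < n" using len by simp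
    then show "c ! i = hered n ! i" using low[OF i] lin_bound[OF kl i] by (simp add: hered_def, linarith)
  qed
qed

lemma hered_nth: "i < n \<Longrightarrow> hered n ! i = n - i"
  by (simp add: hered_def)

lemma hered_kl: "n \<ge> 1 \<Longrightarrow> kupisch_linear n (hered n)"
  unfolding kupisch_linear_def by (auto simp: hered_nth) (simp add: hered_def)

lemma hered_good:
  assumes n1: "n \<ge> 1"
  shows "good False n (hered n)"
proof -
  have kl: "kupisch_linear n (hered n)" by (rule hered_kl[OF n1])
  have fg: "finite_gldim False n (hered n)" unfolding finite_gldim_def
  proof (intro allI impI)
    fix i assume i: "i < n"
    have "snd ((syzygy False n (hered n) ^^ 2) (i, 1)) = 0"
    proof (cases "i + 1 < n")
      case True
      then show ?thesis using i by (simp add: syzygy_def step_def hered_nth numeral_2_eq_2)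
    next
      case False
      then show ?thesis using i by (simp add: syzygy_def step_def hered_nth numeral_2_eq_2)
    qed
    then show "\<exists>k. snd ((syzygy False n (hered n) ^^ k) (i, 1)) = 0" by blast
  qed
  have row: "(cartan False n (hered n) *\<^sub>v z) $ i = Pl z n - Pl z i"
    if "z \<in> carrier_vec n" "i < n" for z i
    using lin_row[OF kl that] that(2) by (simp add: hered_nth)
  have mg: "magnitude (cartan False n (hered n)) = 1"
  proof (rule mag_one_intro[OF cartan_carrier])
    fix z :: "rat vec" assume zc: "z \<in> carrier_vec n" and Cz: "cartan False n (hered n) *\<^sub>v z = 0\<^sub>v n"
    have eq: "Pl z i = Pl z n" if "i < n" for i using row[OF zc that] Cz that by simp
    show "z = 0\<^sub>v n"
    proof (rule eq_vecI)
      fix j assume j: "j < dim_vec (0\<^sub>v n :: rat vec)"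
      have "Pl z (Suc j) = Pl z j + z $ j" by (simp add: Pl_def)
      moreover have "Pl z (Suc j) = Pl z n" using eq[of "Suc j"] j by (cases "Suc j = n") auto
      ultimately show "z $ j = 0\<^sub>v n $ j" using eq[of j] j by simp
    qed (use zc in simp)
  next
    fix z :: "rat vec" assume zc: "z \<in> carrier_vec n" and Cz: "cartan False n (hered n) *\<^sub>v z = ones n"
    have "Pl z n - Pl z 0 = 1" using row[OF zc, of 0] Cz n1 by (simp add: ones_def)
    then show "(\<Sum>j<n. z$j) = 1" by (simp add: Pl_def)
  qed
  show ?thesis unfolding good_def using fg mg by simp
qed


definition Fs :: "nat \<Rightarrow> nat \<Rightarrow> nat list set" where
  "Fs m v = {xs. length xs = m \<and> sorted xs \<and> (\<forall>x\<in>set xs. x \<le> v) \<and> (\<forall>i<m. xs!i \<noteq> Suc i)}"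

fun W :: "nat \<Rightarrow> nat \<Rightarrow> nat" where
  "W 0 v = 1"
| "W (Suc m) v = (\<Sum>w\<le>v. if w = Suc m then 0 else W m w)"

lemma Fs_finite: "finite (Fs m v)"
proof -
  have "Fs m v \<subseteq> {xs. set xs \<subseteq> {..v} \<and> length xs = m}" unfolding Fs_def by auto
  moreover have "finite {xs. set xs \<subseteq> {..v} \<and> length xs = m}"
    by (rule finite_lists_length_eq) simp
  ultimately show ?thesis by (rule finite_subset)
qed

lemma Fs_0: "Fs 0 v = {[]}" unfolding Fs_def by auto

lemma Fs_Suc: "Fs (Suc m) v = (\<Union>w\<in>{w. w \<le> v \<and> w \<noteq> Suc m}. (\<lambda>xs. xs @ [w]) ` Fs m w)"
proof (intro equalityI subsetI)
  fix xs assume xs: "xs \<in> Fs (Suc m) v"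
  then have "length xs = Suc m" unfolding Fs_def by simp
  then obtain ys w where yw: "xs = ys @ [w]" "length ys = m"
    by (metis length_Suc_conv_rev)
  have "sorted (ys @ [w])" using xs yw unfolding Fs_def by simp
  then have s: "sorted ys" "\<forall>y\<in>set ys. y \<le> w" by (auto simp: sorted_append)
  have wv: "w \<le> v" using xs yw unfolding Fs_def by simp
  have wm: "w \<noteq> Suc m" using xs yw unfolding Fs_def by (auto dest: spec[of _ m])
  have "\<forall>i<m. ys!i \<noteq> Suc i"
  proof (intro allI impI)
    fix i assume "i < m"
    then show "ys!i \<noteq> Suc i" using xs yw unfolding Fs_def by (auto simp: nth_append dest!: spec[of _ i])
  qed
  then have "ys \<in> Fs m w" using s yw unfolding Fs_def by simp
  then show "xs \<in> (\<Union>w\<in>{w. w \<le> v \<and> w \<noteq> Suc m}. (\<lambda>xs. xs @ [w]) ` Fs m w)"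
    using yw wv wm by blast
next
  fix xs assume "xs \<in> (\<Union>w\<in>{w. w \<le> v \<and> w \<noteq> Suc m}. (\<lambda>xs. xs @ [w]) ` Fs m w)"
  then obtain w ys where w: "w \<le> v" "w \<noteq> Suc m" and ys: "ys \<in> Fs m w" and xs: "xs = ys @ [w]" by blast
  have "\<forall>i<Suc m. xs!i \<noteq> Suc i"
  proof (intro allI impI)
    fix i assume "i < Suc m"
    then consider "i < m" | "i = m" by linarith
    then show "xs!i \<noteq> Suc i"
      by cases (use ys xs w in \<open>auto simp: Fs_def nth_append\<close>)
  qed
  then show "xs \<in> Fs (Suc m) v" using ys xs w unfolding Fs_def by (auto simp: sorted_append)
qed

lemma card_Fs: "card (Fs m v) = W m v"
proof (induction m arbitrary: v)
  case 0 then show ?case by (simp add: Fs_0)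
next
  case (Suc m)
  let ?I = "{w. w \<le> v \<and> w \<noteq> Suc m}"
  have "card (Fs (Suc m) v) = (\<Sum>w\<in>?I. card ((\<lambda>xs. xs @ [w]) ` Fs m w))"
    unfolding Fs_Suc
    by (rule card_UN_disjoint) (auto simp: Fs_finite)
  also have "\<dots> = (\<Sum>w\<in>?I. W m w)"
    by (rule sum.cong) (auto simp: card_image inj_on_def Suc.IH)
  also have "\<dots> = (\<Sum>w\<le>v. if w = Suc m then 0 else W m w)"
  proof -
    have "(\<Sum>w\<le>v. if w = Suc m then 0 else W m w) = (\<Sum>w\<in>{..v} \<inter> {w. w \<noteq> Suc m}. W m w)"
      by (simp add: sum.inter_restrict if_not_P) (rule sum.cong, auto)
    also have "{..v} \<inter> {w. w \<noteq> Suc m} = ?I" by auto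
    finally show ?thesis by simp
  qed
  finally show ?case by simp
qed

definition B :: "nat \<Rightarrow> nat \<Rightarrow> rat" where
  "B p q = of_nat (p - q + 1) * of_nat (p + q choose q) / of_nat (p + 1)"

lemma B0: "B p 0 = 1" unfolding B_def by simp

lemma alg: fixes P Q X :: rat assumes "P \<ge> 0" "Q \<ge> 0"
  shows "(P - Q + 1) * (X + (P+1)*X/(Q+1)) / (P+2) = (P - Q) * ((P+1)*X/(Q+1)) / (P+1) + (P - Q + 2) * X / (P+2)"
proof -
  have a: "P + 1 \<noteq> 0" "P + 2 \<noteq> 0" "Q + 1 \<noteq> 0" using assms by auto
  have L: "(P - Q + 1) * (X + (P+1)*X/(Q+1)) / (P+2) = X * ((P - Q + 1) * (P + Q + 2)) / ((Q+1)*(P+2))"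
    using a by (simp add: field_simps)
  have "(P - Q) * ((P+1)*X/(Q+1)) / (P+1) = ((P+1) * ((P - Q) * X/(Q+1))) / (P+1)"
    by (simp add: algebra_simps)
  also have "\<dots> = (P-Q)*X/(Q+1)" using a(1) by (rule nonzero_mult_div_cancel_left)
  finally have R1: "(P - Q) * ((P+1)*X/(Q+1)) / (P+1) = (P-Q)*X/(Q+1)" .
  have R2: "(P-Q)*X/(Q+1) + (P - Q + 2) * X / (P+2) = ((P-Q)*X*(P+2) + (P - Q + 2) * X * (Q+1)) / ((Q+1)*(P+2))"
    by (rule add_frac_eq[OF a(3) a(2)])
  have N: "X * ((P - Q + 1) * (P + Q + 2)) = (P-Q)*X*(P+2) + (P - Q + 2) * X * (Q+1)" by (simp add: algebra_simps)
  show ?thesis unfolding L R1 R2 N ..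
qed

lemma B_rec:
  assumes "q < p"
  shows "B (Suc p) (Suc q) = B p (Suc q) + B (Suc p) q"
proof -
  define X where "X = (p + q + 1) choose q"
  define Y where "Y = (p + q + 1) choose (Suc q)"
  have P: "(Suc p + Suc q) choose (Suc q) = X + Y"
    unfolding X_def Y_def by (simp add: add.commute add.left_commute)
  have "Suc q * Y = (p + q + 1) * ((p + q) choose q)"
    unfolding Y_def using binomial_absorption[of q "p+q+1"] by simp
  moreover have "(p + q + 1 - q) * X = (p + q + 1) * ((p + q) choose q)"
    unfolding X_def using binomial_absorb_comp[of "p+q+1" q] by simp
  ultimately have YX: "Suc q * Y = (p + 1) * X" by simp
  have YXr: "(of_nat q + 1) * (of_nat Y :: rat) = (of_nat p + 1) * of_nat X"
    using arg_cong[OF YX, of "of_nat :: nat \<Rightarrow> rat"] by (simp add: algebra_simps)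
  have e1: "B (Suc p) (Suc q) = (of_nat p - of_nat q + 1) * (of_nat X + of_nat Y) / (of_nat p + 2)"
    unfolding B_def P using assms by (simp add: of_nat_diff algebra_simps)
  have e2: "B p (Suc q) = (of_nat p - of_nat q) * of_nat Y / (of_nat p + 1)"
    unfolding B_def Y_def using assms by (simp add: of_nat_diff add.commute add.left_commute)
  have e3: "B (Suc p) q = (of_nat p - of_nat q + 2) * of_nat X / (of_nat p + 2)"
    unfolding B_def X_def using assms by (simp add: of_nat_diff add.commute add.left_commute)
  have Y: "(of_nat Y :: rat) = (of_nat p + 1) * of_nat X / (of_nat q + 1)"
    using YXr by (simp add: field_simps)
  show ?thesis unfolding e1 e2 e3 Y by (rule alg) auto
qed

lemma B_diag: "B (Suc r) (Suc r) = B (Suc r) r"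
proof -
  define K where "K = Suc (2*r) choose r"
  have s: "(Suc (2*r)) choose (Suc r) = K"
    unfolding K_def using binomial_symmetric[of "Suc r" "Suc (2*r)"] by (simp del: binomial_Suc_Suc)
  have eq: "Suc r + Suc r = Suc (Suc (2*r))" by simp
  have "(Suc r + Suc r) choose (Suc r) = (Suc (2*r) choose r) + (Suc (2*r) choose Suc r)"
    unfolding eq by (rule binomial_Suc_Suc)
  then have h1: "(Suc r + Suc r) choose (Suc r) = 2 * K"
    using s unfolding K_def by (simp del: binomial_Suc_Suc)
  have h2: "Suc r + r = Suc (2*r)" by simp
  have "B (Suc r) (Suc r) = of_nat (2 * K) / of_nat (Suc r + 1)"
    unfolding B_def h1 by (simp del: binomial_Suc_Suc)
  also have "\<dots> = B (Suc r) r"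
    unfolding B_def h2 K_def by (simp del: binomial_Suc_Suc add: Suc_diff_le)
  finally show ?thesis .
qed

lemma W_Suc0: "W (Suc m) 0 = W m 0" by simp

lemma W_SucSuc: "W (Suc m) (Suc v) = W (Suc m) v + (if Suc v = Suc m then 0 else W m (Suc v))"
  by simp

declare W.simps(2)[simp del]

lemma W_closed: "of_nat (W m v) = (if v \<le> m then B m v else B v m)"
proof (induction m arbitrary: v)
  case 0 then show ?case by (simp add: B0)
next
  case (Suc m)
  note outer = Suc.IH
  show ?case
  proof (induction v)
    case 0 then show ?case using outer[of 0] W_Suc0[of m] by (simp add: B0)
  next
    case (Suc v)
    note inner = Suc.IH
    consider "v < m" | "v = m" | "m < v" by linarith
    then show ?case
    proof cases
      case 1
      have i1: "of_nat (W (Suc m) v) = B (Suc m) v" using inner 1 by simp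
      have i2: "of_nat (W m (Suc v)) = B m (Suc v)" using outer[of "Suc v"] 1 by simp
      have "of_nat (W (Suc m) (Suc v)) = B (Suc m) v + B m (Suc v)"
        unfolding W_SucSuc[of m v] using i1 i2 1 by simp
      then show ?thesis using B_rec[OF 1] 1 by simp
    next
      case 2
      have "of_nat (W (Suc m) (Suc v)) = B (Suc m) m" unfolding W_SucSuc[of m v] using inner 2 by simp
      then show ?thesis using B_diag[of m] 2 by simp
    next
      case 3
      have a: "of_nat (W (Suc m) v) = B v (Suc m)"
      proof (cases "v = Suc m")
        case True then show ?thesis using inner by simp
      next
        case False then show ?thesis using inner 3 by simp
      qed
      have i2: "of_nat (W m (Suc v)) = B (Suc v) m" using outer[of "Suc v"] 3 by simp
      have "of_nat (W (Suc m) (Suc v)) = B v (Suc m) + B (Suc v) m"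
        unfolding W_SucSuc[of m v] using a i2 3 by simp
      then show ?thesis using B_rec[OF 3] 3 by simp
    qed
  qed
qed

lemma cat_binom: "(Suc r + Suc r) choose (Suc r) = 2 * (Suc (2*r) choose r)"
proof -
  define K where "K = Suc (2*r) choose r"
  have s: "(Suc (2*r)) choose (Suc r) = K"
    unfolding K_def using binomial_symmetric[of "Suc r" "Suc (2*r)"] by (simp del: binomial_Suc_Suc)
  have eq: "Suc r + Suc r = Suc (Suc (2*r))" by simp
  have "(Suc r + Suc r) choose (Suc r) = (Suc (2*r) choose r) + (Suc (2*r) choose Suc r)"
    unfolding eq by (rule binomial_Suc_Suc)
  then show ?thesis using s unfolding K_def by (simp del: binomial_Suc_Suc)
qed

lemma W_cat: "W r (Suc r) * (r + 2) = (Suc r + Suc r) choose (Suc r)"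
proof -
  have h2: "Suc r + r = Suc (2*r)" by simp
  have "(of_nat (W r (Suc r)) :: rat) = B (Suc r) r" using W_closed[of r "Suc r"] by simp
  also have "\<dots> = 2 * of_nat (Suc (2*r) choose r) / (of_nat r + 2)"
    unfolding B_def h2 by (simp del: binomial_Suc_Suc add: Suc_diff_le)
  finally have "(of_nat (W r (Suc r)) :: rat) * (of_nat r + 2) = 2 * of_nat (Suc (2*r) choose r)"
    by (simp add: field_simps)
  then have "(of_nat (W r (Suc r) * (r + 2)) :: rat) = of_nat (2 * (Suc (2*r) choose r))"
    by (simp add: algebra_simps)
  then have "W r (Suc r) * (r + 2) = 2 * (Suc (2*r) choose r)" by (simp only: of_nat_eq_iff)
  then show ?thesis using cat_binom[of r] by simp
qed


definition Rset :: "nat \<Rightarrow> nat list set" where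
  "Rset n = {c. kupisch_cyclic n c \<and> c!0 = n \<and> (\<forall>y<n. \<exists>m. (ebar n c ^^ m) y = 0)}"

definition Rc :: "nat \<Rightarrow> nat list \<Rightarrow> bool" where
  "Rc n c \<longleftrightarrow> kupisch_cyclic n c \<and> c!0 = n \<and> (\<forall>x. 0 < x \<and> x < n \<longrightarrow> c!x \<noteq> n)"

context kcyc begin

lemma cstep': "Suc x < n \<Longrightarrow> c!(Suc x) + 1 \<ge> c!x"
  using cstep[of x] by simp

lemma k1: assumes c0: "c!0 = n" shows "x < n \<Longrightarrow> x + c!x \<ge> n"
proof (induction x)
  case 0 then show ?case using c0 by simp
next
  case (Suc x)
  have "c ! (Suc x) + 1 \<ge> c ! x" using cstep' Suc by simp
  then show ?case using Suc by simp
qed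

lemma k2: "x + 1 < n \<Longrightarrow> x + c!x \<le> Suc x + c!(Suc x)"
  using cstep'[of x] by simp

lemma k4: assumes c0: "c!0 = n" shows "x < n \<Longrightarrow> x + c!x \<le> 2 * n"
proof (induction "n - x" arbitrary: x rule: less_induct)
  case less
  show ?case
  proof (cases "Suc x < n")
    case True
    have "n - Suc x < n - x" using True by simp
    from less.hyps[OF this] True have "Suc x + c!(Suc x) \<le> 2 * n" by simp
    then show ?thesis using k2[of x] True by simp
  next
    case False
    then have x: "x = n - 1" using less.prems by simp
    have "c ! ((x + 1) mod n) + 1 \<ge> c ! x" using cstep less.prems by simp
    moreover have "(x + 1) mod n = 0" using x npos by simp
    ultimately show ?thesis using c0 x by simp
  qed
qed

lemma eb_fix: "x < n \<Longrightarrow> c!x = n \<Longrightarrow> (eb ^^ m) x = x"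
  by (induction m) (auto simp: ebar_def)

lemma U: assumes "0 < x" "x < n" "c!x > n" "\<forall>x. 0 < x \<and> x < n \<longrightarrow> c!x \<noteq> n"
  shows "x \<le> y \<Longrightarrow> y < n \<Longrightarrow> c!y > n"
proof (induction y)
  case 0 then show ?case using assms by simp
next
  case (Suc y)
  show ?case
  proof (cases "x = Suc y")
    case True then show ?thesis using assms by simp
  next
    case False
    then have "c!y > n" using Suc by simp
    moreover have "c ! (Suc y) + 1 \<ge> c ! y" using cstep' Suc.prems by simp
    moreover have "c ! Suc y \<noteq> n" using assms(4) Suc.prems by simp
    ultimately show ?thesis by simp
  qed
qed

lemma reach_of_nofix:
  assumes c0: "c!0 = n" and nf: "\<forall>x. 0 < x \<and> x < n \<longrightarrow> c!x \<noteq> n"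
  shows "y < n \<Longrightarrow> \<exists>m. (eb ^^ m) y = 0"
proof -
  have down: "\<exists>m. (eb ^^ m) y = 0" if "0 < y" "y < n" "c!y < n" for y
    using that
  proof (induction y rule: less_induct)
    case (less y)
    have "n \<le> y + c!y" using k1[OF c0 less.prems(2)] .
    then have eby: "eb y = y + c!y - n" unfolding ebar_def using less.prems
      by (simp add: le_mod_geq)
    show ?case
    proof (cases "eb y = 0")
      case True then show ?thesis by (intro exI[of _ 1]) simp
    next
      case False
      define y' where "y' = eb y"
      have y': "0 < y'" "y' < y" using False less.prems eby unfolding y'_def by auto
      have "c!y' < n"
      proof (rule ccontr)
        assume "\<not> c!y' < n"
        then have "c!y' > n" using nf y' less.prems by (metis linorder_neqE_nat order.strict_trans)
        then have "c!y > n" using U[of y' y] y' less.prems nf by simp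
        then show False using less.prems by simp
      qed
      then obtain m where "(eb ^^ m) y' = 0" using less.IH[of y'] y' less.prems by auto
      then have "(eb ^^ (Suc m)) y = 0" unfolding y'_def by (simp add: funpow_Suc_right del: funpow.simps)
      then show ?thesis by blast
    qed
  qed
  have up: "\<exists>m. (eb ^^ m) y = 0" if "0 < y" "y < n" "c!y > n" for y
    using that
  proof (induction "n - y" arbitrary: y rule: less_induct)
    case (less y)
    have le: "y + c!y \<le> 2 * n" using k4[OF c0 less.prems(2)] .
    show ?case
    proof (cases "y + c!y = 2 * n")
      case True
      then have "eb y = 0" unfolding ebar_def by simp
      then show ?thesis by (intro exI[of _ 1]) simp
    next
      case False
      then have eby: "eb y = y + c!y - n" unfolding ebar_def using less.prems le
        by (simp add: le_mod_geq)
      define y' where "y' = eb y"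
      have y': "y < y'" "y' < n" using False less.prems eby le unfolding y'_def by auto
      have "c!y' > n" using U[of y y'] y' less.prems nf by simp
      have "n - y' < n - y" using y' by simp
      then obtain m where "(eb ^^ m) y' = 0" using less.hyps[of y'] y' less.prems \<open>c!y' > n\<close> by auto
      then have "(eb ^^ (Suc m)) y = 0" unfolding y'_def by (simp add: funpow_Suc_right del: funpow.simps)
      then show ?thesis by blast
    qed
  qed
  assume y: "y < n"
  show ?thesis
  proof (cases "y = 0")
    case True then show ?thesis by (intro exI[of _ 0]) simp
  next
    case False
    then have "c!y < n \<or> c!y > n" using nf y by auto
    then show ?thesis using down up False y by auto
  qed
qed

lemma R_iff: "c!0 = n \<Longrightarrow> (\<forall>y<n. \<exists>m. (eb ^^ m) y = 0) \<longleftrightarrow> (\<forall>x. 0 < x \<and> x < n \<longrightarrow> c!x \<noteq> n)"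
proof
  assume r: "\<forall>y<n. \<exists>m. (eb ^^ m) y = 0"
  show "\<forall>x. 0 < x \<and> x < n \<longrightarrow> c!x \<noteq> n"
  proof (intro allI impI notI)
    fix x assume x: "0 < x \<and> x < n" and cx: "c!x = n"
    obtain m where "(eb ^^ m) x = 0" using r x by blast
    then show False using eb_fix[of x m] x cx by simp
  qed
next
  assume "c!0 = n" "\<forall>x. 0 < x \<and> x < n \<longrightarrow> c!x \<noteq> n"
  then show "\<forall>y<n. \<exists>m. (eb ^^ m) y = 0" using reach_of_nofix by blast
qed

end

lemma Rset_eq: "Rset n = {c. Rc n c}"
  unfolding Rset_def Rc_def using kcyc.R_iff kcyc.intro by blast


definition fl :: "nat \<Rightarrow> nat list \<Rightarrow> nat list" where
  "fl n c = map (\<lambda>i. Suc i + c!(Suc i) - n) [0..<n-1]"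
definition gl :: "nat \<Rightarrow> nat list \<Rightarrow> nat list" where
  "gl n xs = n # map (\<lambda>i. n + xs!i - Suc i) [0..<n-1]"
definition Fs' :: "nat \<Rightarrow> nat list set" where
  "Fs' n = Fs (n-1) n - {replicate (n-1) 0}"

lemma fl_nth: "i < n - 1 \<Longrightarrow> fl n c ! i = Suc i + c!(Suc i) - n"
  unfolding fl_def by simp

lemma gl_nth0: "gl n xs ! 0 = n" unfolding gl_def by simp
lemma gl_nthS: "i < n - 1 \<Longrightarrow> gl n xs ! Suc i = n + xs!i - Suc i"
  unfolding gl_def by simp
lemma gl_len: "n \<ge> 1 \<Longrightarrow> length (gl n xs) = n"
  unfolding gl_def by simp

context kcyc begin

lemma Fmono: "x \<le> y \<Longrightarrow> y < n \<Longrightarrow> x + c!x \<le> y + c!y"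
proof (induction y)
  case (Suc y)
  show ?case
  proof (cases "x = Suc y")
    case False
    then have "x + c!x \<le> y + c!y" using Suc by simp
    then show ?thesis using k2[of y] Suc.prems by simp
  qed simp
qed simp

lemma fl_in:
  assumes R: "Rc n c"
  shows "fl n c \<in> Fs' n"
proof -
  have c0: "c!0 = n" and nf: "\<forall>x. 0 < x \<and> x < n \<longrightarrow> c!x \<noteq> n" using R unfolding Rc_def by auto
  have n2: "n \<ge> 2" using cge2[of 0] npos c0 by simp
  let ?xs = "fl n c"
  have len: "length ?xs = n - 1" unfolding fl_def by simp
  have sorted: "sorted ?xs" unfolding sorted_iff_nth_mono len
  proof (intro allI impI)
    fix i j assume "i \<le> j" "j < n - 1"
    then have "Suc i + c!(Suc i) \<le> Suc j + c!(Suc j)" using Fmono[of "Suc i" "Suc j"] by simp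
    then show "?xs ! i \<le> ?xs ! j" using \<open>i \<le> j\<close> \<open>j < n - 1\<close> by (simp add: fl_nth)
  qed
  have bnd: "\<forall>x\<in>set ?xs. x \<le> n"
  proof
    fix x assume "x \<in> set ?xs"
    then obtain i where i: "i < n - 1" "x = ?xs ! i" using len by (metis in_set_conv_nth)
    have "Suc i + c!(Suc i) \<le> 2 * n" using k4[OF c0, of "Suc i"] i by simp
    then show "x \<le> n" using i by (simp add: fl_nth)
  qed
  have nfx: "\<forall>i<n-1. ?xs ! i \<noteq> Suc i"
  proof (intro allI impI notI)
    fix i assume i: "i < n - 1" and eq: "?xs ! i = Suc i"
    have "Suc i + c!(Suc i) \<ge> n" using k1[OF c0, of "Suc i"] i by simp
    then have "c!(Suc i) = n" using eq i by (simp add: fl_nth)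
    then show False using nf i by simp
  qed
  have nz: "?xs \<noteq> replicate (n-1) 0"
  proof
    assume "?xs = replicate (n-1) 0"
    then have "?xs ! (n-2) = 0" using n2 by simp
    moreover have "?xs ! (n-2) = (n - 1) + c!(n-1) - n" using n2 fl_nth[of "n-2" n c]
      by (simp add: Suc_diff_Suc numeral_2_eq_2)
    moreover have "c!(n-1) \<ge> 2" using cge2 npos by simp
    ultimately show False using n2 by simp
  qed
  show ?thesis unfolding Fs'_def Fs_def using len sorted bnd nfx nz by simp
qed

lemma gl_fl:
  assumes R: "Rc n c"
  shows "gl n (fl n c) = c"
proof (rule nth_equalityI)
  have c0: "c!0 = n" using R unfolding Rc_def by auto
  show "length (gl n (fl n c)) = length c" using gl_len npos len by simp
  fix i assume "i < length (gl n (fl n c))"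
  then have i: "i < n" using gl_len npos by simp
  show "gl n (fl n c) ! i = c ! i"
  proof (cases i)
    case 0 then show ?thesis using c0 gl_nth0 by simp
  next
    case (Suc j)
    then have j: "j < n - 1" using i by simp
    have "Suc j + c!(Suc j) \<ge> n" using k1[OF c0, of "Suc j"] i Suc by simp
    then show ?thesis using Suc j by (simp add: gl_nthS fl_nth)
  qed
qed

end

lemma Fs'_n2: "xs \<in> Fs' n \<Longrightarrow> n \<ge> 2"
proof (rule ccontr)
  assume xs: "xs \<in> Fs' n" and "\<not> n \<ge> 2"
  then have "n - 1 = 0" by simp
  then show False using xs by (auto simp: Fs'_def Fs_def)
qed

lemma fl_gl: "xs \<in> Fs' n \<Longrightarrow> fl n (gl n xs) = xs"
proof -
  assume xs: "xs \<in> Fs' n"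
  have len: "length xs = n - 1" using xs unfolding Fs'_def Fs_def by simp
  show ?thesis
  proof (rule nth_equalityI)
    show "length (fl n (gl n xs)) = length xs" using len unfolding fl_def by simp
    fix i assume "i < length (fl n (gl n xs))"
    then have i: "i < n - 1" unfolding fl_def by simp
    then show "fl n (gl n xs) ! i = xs ! i" by (simp add: fl_nth gl_nthS)
  qed
qed

lemma gl_in:
  assumes xs: "xs \<in> Fs' n"
  shows "Rc n (gl n xs)"
proof -
  have n2: "n \<ge> 2" using Fs'_n2[OF xs] .
  have len: "length xs = n - 1" and srt: "sorted xs" and bnd: "\<forall>x\<in>set xs. x \<le> n"
    and nfx: "\<forall>i<n-1. xs!i \<noteq> Suc i" and nz: "xs \<noteq> replicate (n-1) 0"
    using xs unfolding Fs'_def Fs_def by auto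
  let ?c = "gl n xs"
  have last1: "xs ! (n-2) \<ge> 1"
  proof (rule ccontr)
    assume "\<not> xs ! (n-2) \<ge> 1"
    then have z: "xs ! (n-2) = 0" by simp
    have "xs = replicate (n-1) 0"
    proof (rule nth_equalityI)
      show "length xs = length (replicate (n-1) 0)" using len by simp
      fix k assume "k < length xs"
      then have k: "k < n - 1" using len by simp
      then have "xs ! k \<le> xs ! (n-2)" using sorted_nth_mono[OF srt, of k "n-2"] len n2 by simp
      then show "xs ! k = replicate (n-1) 0 ! k" using z k by simp
    qed
    then show False using nz by simp
  qed
  have xle: "xs ! j \<le> n" if "j < n - 1" for j using bnd that len by (simp add: nth_mem)
  have cS: "?c ! Suc j = n + xs!j - Suc j" if "j < n - 1" for j using gl_nthS that by simp
  have lenc: "length ?c = n" using gl_len n2 by simp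
  have kc: "kupisch_cyclic n ?c" unfolding kupisch_cyclic_def
  proof (intro conjI allI impI)
    show "length ?c = n" by (rule lenc)
    show "1 \<le> n" using n2 by simp
    fix i assume i: "i < n"
    show "2 \<le> ?c ! i"
    proof (cases i)
      case 0 then show ?thesis using n2 gl_nth0 by simp
    next
      case (Suc j)
      then have j: "j < n - 1" using i by simp
      show ?thesis
      proof (cases "Suc j < n - 1")
        case True then show ?thesis using cS[OF j] Suc by simp
      next
        case False
        then have "j = n - 2" using j by simp
        then show ?thesis using cS[OF j] Suc last1 n2 by simp
      qed
    qed
    show "?c ! i - 1 \<le> ?c ! ((i + 1) mod n)"
    proof (cases "i + 1 < n")
      case True
      then have m: "(i + 1) mod n = Suc i" by simp
      show ?thesis
      proof (cases i)
        case 0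
        then show ?thesis using m cS[of 0] n2 gl_nth0 by simp
      next
        case (Suc j)
        have j: "Suc j < n - 1" using True Suc by simp
        have "xs ! j \<le> xs ! Suc j" using sorted_nth_mono[OF srt, of j "Suc j"] j len by simp
        then show ?thesis using m Suc cS[of j] cS[OF j] j by simp
      qed
    next
      case False
      then have ii: "i = n - 1" using i by simp
      then have m: "(i + 1) mod n = 0" using n2 by simp
      define j where "j = n - 2"
      have ij: "i = Suc j" using ii n2 unfolding j_def by simp
      have j: "j < n - 1" using n2 unfolding j_def by simp
      have "?c ! i = n + xs!j - Suc j" using cS[OF j] ij by simp
      also have "\<dots> = xs ! j + 1" using n2 unfolding j_def by simp
      finally show ?thesis using m xle[OF j] gl_nth0 by simp
    qed
  qed
  have nf: "\<forall>x. 0 < x \<and> x < n \<longrightarrow> ?c!x \<noteq> n"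
  proof (intro allI impI notI)
    fix x assume x: "0 < x \<and> x < n" and cx: "?c ! x = n"
    then obtain j where xj: "x = Suc j" by (cases x) auto
    then have j: "j < n - 1" using x by simp
    have "n + xs!j - Suc j = n" using cx cS[OF j] xj by simp
    then have "xs ! j = Suc j" using j by simp
    then show False using nfx j by simp
  qed
  show ?thesis unfolding Rc_def using kc nf gl_nth0 by simp
qed

lemma bij_fl: "bij_betw (fl n) {c. Rc n c} (Fs' n)"
proof (rule bij_betw_byWitness[where f'="gl n"])
  show "\<forall>a\<in>{c. Rc n c}. gl n (fl n a) = a"
  proof
    fix a assume "a \<in> {c. Rc n c}"
    then have R: "Rc n a" by simp
    then have "kcyc n a" unfolding Rc_def by (intro kcyc.intro) simp
    then show "gl n (fl n a) = a" using kcyc.gl_fl R by blast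
  qed
  show "\<forall>a'\<in>Fs' n. fl n (gl n a') = a'" using fl_gl by blast
  show "fl n ` {c. Rc n c} \<subseteq> Fs' n"
  proof
    fix x assume "x \<in> fl n ` {c. Rc n c}"
    then obtain a where R: "Rc n a" and x: "x = fl n a" by blast
    then have "kcyc n a" unfolding Rc_def by (intro kcyc.intro) simp
    then show "x \<in> Fs' n" using kcyc.fl_in R x by blast
  qed
  show "gl n ` Fs' n \<subseteq> {c. Rc n c}" using gl_in by blast
qed

lemma card_R: "n \<ge> 1 \<Longrightarrow> card (Rset n) + 1 = catalan n"
proof -
  assume n1: "n \<ge> 1"
  have "card (Rset n) = card (Fs' n)" unfolding Rset_eq using bij_betw_same_card[OF bij_fl] .
  moreover have mem: "replicate (n-1) 0 \<in> Fs (n-1) n" unfolding Fs_def by auto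
  have "card (Fs' n) = card (Fs (n-1) n) - 1"
    unfolding Fs'_def by (rule card_Diff_singleton[OF mem])
  moreover have "card (Fs (n-1) n) > 0" using Fs_finite mem by (auto simp: card_gt_0_iff)
  moreover have "card (Fs (n-1) n) = catalan n"
  proof -
    obtain r where r: "n = Suc r" using n1 by (cases n) auto
    have eq: "(2 * n) choose n = W r (Suc r) * (n + 1)"
      using W_cat[of r] r by (simp del: binomial_Suc_Suc add: mult_2)
    have "catalan n = W r (Suc r)" unfolding catalan_def eq by (simp only: nonzero_mult_div_cancel_right[of "n+1"])
    then show ?thesis using card_Fs r by simp
  qed
  ultimately show ?thesis by simp
qed


definition orb :: "nat list \<Rightarrow> bool \<times> nat list set" where
  "orb c = (True, {rotate k c | k. True})"

lemma uniq_root: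
  assumes kc: "kupisch_cyclic n c" and reach: "\<forall>y<n. \<exists>m. (ebar n c ^^ m) y = x0"
    and x: "x < n" "c!x = n"
  shows "x = x0"
proof -
  interpret kcyc n c by (rule kcyc.intro[OF kc])
  obtain m where "(eb ^^ m) x = x0" using reach x by blast
  then show ?thesis using eb_fix[OF x] by simp
qed

lemma rot_mod: fixes x0 n i :: nat shows "x0 < n \<Longrightarrow> i < n \<Longrightarrow> (x0 + i) mod n = x0 \<Longrightarrow> i = 0"
proof (rule ccontr)
  assume a: "x0 < n" "i < n" "(x0 + i) mod n = x0" "i \<noteq> 0"
  show False
  proof (cases "x0 + i < n")
    case True
    then have "(x0 + i) mod n = x0 + i" by simp
    then show False using a by simp
  next
    case False
    then have "(x0 + i) mod n = x0 + i - n" using a by (simp add: le_mod_geq)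
    then show False using a by simp
  qed
qed

lemma rotate_Rc:
  assumes kc: "kupisch_cyclic n c" and g: "good True n c"
  shows "\<exists>c'. Rc n c' \<and> orb c' = orb c"
proof -
  interpret kcyc n c by (rule kcyc.intro[OF kc])
  obtain x0 where x0: "x0 < n" "c!x0 = n" and reach: "\<forall>y<n. \<exists>m. (eb ^^ m) y = x0"
    using good_imp[OF g] by blast
  define c' where "c' = rotate x0 c"
  have lc': "length c' = n" unfolding c'_def using len by simp
  have nth': "c' ! i = c ! ((x0 + i) mod n)" if "i < n" for i
    unfolding c'_def using that len by (simp add: nth_rotate)
  have kc': "kupisch_cyclic n c'" unfolding kupisch_cyclic_def
  proof (intro conjI allI impI)
    show "length c' = n" by (rule lc')
    show "1 \<le> n" using npos .
    fix i assume i: "i < n"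
    show "2 \<le> c' ! i" using nth'[OF i] cge2[of "(x0 + i) mod n"] npos by simp
    have "(x0 + (i + 1) mod n) mod n = ((x0 + i) mod n + 1) mod n"
      by (metis add.assoc mod_add_left_eq mod_add_right_eq)
    then have "c' ! ((i + 1) mod n) = c ! (((x0 + i) mod n + 1) mod n)"
      using nth'[of "(i+1) mod n"] npos by simp
    then show "c' ! i - 1 \<le> c' ! ((i + 1) mod n)"
      using cstep[of "(x0 + i) mod n"] nth'[OF i] npos by simp
  qed
  have c'0: "c' ! 0 = n" using nth'[of 0] x0 npos by simp
  have nf: "\<forall>x. 0 < x \<and> x < n \<longrightarrow> c'!x \<noteq> n"
  proof (intro allI impI notI)
    fix x assume x: "0 < x \<and> x < n" and cx: "c' ! x = n"
    have "c ! ((x0 + x) mod n) = n" using cx nth' x by simp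
    then have "(x0 + x) mod n = x0" using uniq_root[OF kc reach] npos by simp
    then have "x = 0" using rot_mod x0 x by blast
    then show False using x by simp
  qed
  have R: "Rc n c'" unfolding Rc_def using kc' c'0 nf by simp
  have "{rotate k c' | k. True} = {rotate k c | k. True}"
  proof (intro equalityI subsetI)
    fix y assume "y \<in> {rotate k c' | k. True}"
    then obtain k where "y = rotate k c'" by blast
    then have "y = rotate (k + x0) c" unfolding c'_def by (simp add: rotate_rotate)
    then show "y \<in> {rotate k c | k. True}" by blast
  next
    fix y assume "y \<in> {rotate k c | k. True}"
    then obtain k where y: "y = rotate k c" by blast
    have "rotate (k + (n - x0)) c' = rotate (k + (n - x0) + x0) c" unfolding c'_def by (simp add: rotate_rotate)
    also have "k + (n - x0) + x0 = k + n" using x0 by simp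
    also have "rotate (k + n) c = rotate k c"
      by (metis len mod_add_self2 rotate_conv_mod)
    finally have "y = rotate (k + (n - x0)) c'" using y by simp
    then show "y \<in> {rotate k c' | k. True}" by blast
  qed
  then have "orb c' = orb c" unfolding orb_def by simp
  then show ?thesis using R by blast
qed

lemma Rc_good: "Rc n c \<Longrightarrow> kupisch_cyclic n c \<and> good True n c"
proof -
  assume R: "Rc n c"
  have kc: "kupisch_cyclic n c" using R unfolding Rc_def by simp
  interpret kcyc n c by (rule kcyc.intro[OF kc])
  have c0: "c!0 = n" using R unfolding Rc_def by simp
  have "c \<in> Rset n" using R Rset_eq by simp
  then have reach: "\<forall>y<n. \<exists>m. (eb ^^ m) y = 0" unfolding Rset_def by simp
  have "good True n c" by (rule good_intro[of 0]) (use npos c0 reach in auto)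
  then show ?thesis using kc by simp
qed

lemma orb_inj: "inj_on orb {c. Rc n c}"
proof (rule inj_onI)
  fix c1 c2 assume R1: "c1 \<in> {c. Rc n c}" and R2: "c2 \<in> {c. Rc n c}" and eq: "orb c1 = orb c2"
  have R1': "Rc n c1" and R2': "Rc n c2" using R1 R2 by auto
  have kc1: "kupisch_cyclic n c1" using R1' unfolding Rc_def by simp
  interpret kcyc n c1 by (rule kcyc.intro[OF kc1])
  have "c2 \<in> {rotate k c2 | k. True}" by (metis (mono_tags, lifting) mem_Collect_eq rotate0 funpow_0 id_apply)
  then have "c2 \<in> {rotate k c1 | k. True}" using eq unfolding orb_def by simp
  then obtain k where k: "c2 = rotate k c1" by blast
  define k' where "k' = k mod n"
  have k'n: "k' < n" unfolding k'_def using npos by simp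
  have c2r: "c2 = rotate k' c1" unfolding k'_def k using rotate_conv_mod len by metis
  have "c2 ! 0 = c1 ! k'" unfolding c2r using len k'n npos by (simp add: nth_rotate)
  then have "c1 ! k' = n" using R2' unfolding Rc_def by simp
  then have "k' = 0" using R1' k'n unfolding Rc_def by auto
  then show "c1 = c2" using c2r by simp
qed

theorem corollary4p5:
  fixes n :: nat
  assumes "n \<ge> 1"
  shows "finite (nakayama_classes_good n) \<and> card (nakayama_classes_good n) = catalan n"
proof -
  have A: "{(False, {c}) | c. kupisch_linear n c \<and> good False n c} = {(False, {hered n})}"
    using lin_good_imp hered_kl[OF assms] hered_good[OF assms] by blast
  have Bc: "{(True, {rotate k c | k. True}) | c. kupisch_cyclic n c \<and> good True n c} = orb ` {c. Rc n c}"
  proof (intro equalityI subsetI)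
    fix x assume "x \<in> {(True, {rotate k c | k. True}) | c. kupisch_cyclic n c \<and> good True n c}"
    then obtain c where c: "kupisch_cyclic n c" "good True n c" and x: "x = orb c" unfolding orb_def by blast
    obtain c' where c': "Rc n c'" "orb c' = orb c" using rotate_Rc[OF c] by blast
    then have "x = orb c'" using x by simp
    then show "x \<in> orb ` {c. Rc n c}" using c' by blast
  next
    fix x assume "x \<in> orb ` {c. Rc n c}"
    then obtain c where "Rc n c" "x = orb c" by blast
    then show "x \<in> {(True, {rotate k c | k. True}) | c. kupisch_cyclic n c \<and> good True n c}"
      using Rc_good unfolding orb_def by blast
  qed
  have eq: "nakayama_classes_good n = {(False, {hered n})} \<union> orb ` {c. Rc n c}"
    unfolding nakayama_classes_good_def A Bc ..
  have finR: "finite {c. Rc n c}"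
    using bij_betw_finite[OF bij_fl] Fs_finite unfolding Fs'_def by simp
  have cardR: "card (orb ` {c. Rc n c}) = card (Rset n)"
    using card_image[OF orb_inj] Rset_eq by simp
  have disj: "{(False, {hered n})} \<inter> orb ` {c. Rc n c} = {}" unfolding orb_def by auto
  have "card (nakayama_classes_good n) = 1 + card (Rset n)"
    unfolding eq using card_Un_disjoint[OF _ _ disj] finR cardR by simp
  then show ?thesis using card_R[OF assms] eq finR by simp
qed


end
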